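(* Let $f=\sum_{J\in\mathbb{N}^n} a_J x^J$ be a nonzero real polynomial, let $\mathcal{M}$ be the set of $P\in\mathbb{N}^n$ with $a_P\neq 0$, and fix an integer $k\ge 0$. Let $M$ be the matrix whose rows are indexed by the vectors $I\in\{0,1\}^n$ with $|I|=k$, whose columns are indexed by the finitely many $J\in\mathbb{N}^n$ such that $I+J\in\mathcal{M}$ for some such $I$, and whose entries are $M_{I,J}=a_{I+J}$. Let $B=M^T M$. Then $$\mathrm{Tr}(B^2)\leq |\mathcal{M}|\,\mathrm{Tr}(B)\left(\sum_{R \in \mathcal{M}} a_R^2\right).$$
   Context: For $\alpha\in\mathbb{N}^n$, $x^\alpha = x_1^{\alpha_1}\cdots x_n^{\alpha_n}/(\alpha_1!\cdots\alpha_n!)$ (scaled monomial basis). For $I\in\{0,1\}^n$, $|I|=\sum_i I_i$. *)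

theory Defs
  imports Complex_Main
begin

text \<open>A real polynomial in the variables indexed by the finite type 'n is given by its
coefficient function a :: ('n \<Rightarrow> nat) \<Rightarrow> real (coefficients w.r.t. the scaled monomial
basis x^J), with finite support.\<close>

definition supp_coeffs :: "(('n \<Rightarrow> nat) \<Rightarrow> real) \<Rightarrow> ('n \<Rightarrow> nat) set" where
  "supp_coeffs a = {P. a P \<noteq> 0}"

definition rows01 :: "nat \<Rightarrow> ('n::finite \<Rightarrow> nat) set" where
  "rows01 k = {I. (\<forall>i. I i \<le> 1) \<and> (\<Sum>i\<in>UNIV. I i) = k}"

definition cols :: "(('n::finite \<Rightarrow> nat) \<Rightarrow> real) \<Rightarrow> nat \<Rightarrow> ('n \<Rightarrow> nat) set" where
  "cols a k = {J. \<exists>I\<in>rows01 k. (\<lambda>i. I i + J i) \<in> supp_coeffs a}"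

definition matM :: "(('n \<Rightarrow> nat) \<Rightarrow> real) \<Rightarrow> ('n \<Rightarrow> nat) \<Rightarrow> ('n \<Rightarrow> nat) \<Rightarrow> real" where
  "matM a I J = a (\<lambda>i. I i + J i)"

definition matB :: "(('n::finite \<Rightarrow> nat) \<Rightarrow> real) \<Rightarrow> nat \<Rightarrow> ('n \<Rightarrow> nat) \<Rightarrow> ('n \<Rightarrow> nat) \<Rightarrow> real" where
  "matB a k J J' = (\<Sum>I\<in>rows01 k. matM a I J * matM a I J')"

definition traceB :: "(('n::finite \<Rightarrow> nat) \<Rightarrow> real) \<Rightarrow> nat \<Rightarrow> real" where
  "traceB a k = (\<Sum>J\<in>cols a k. matB a k J J)"

definition traceB2 :: "(('n::finite \<Rightarrow> nat) \<Rightarrow> real) \<Rightarrow> nat \<Rightarrow> real" where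
  "traceB2 a k = (\<Sum>J\<in>cols a k. \<Sum>J'\<in>cols a k. matB a k J J' * matB a k J' J)"

end

theory Submission
  imports Defs "HOL-Library.FuncSet"
begin

lemma cs_card:
  fixes f :: "'a \<Rightarrow> real"
  assumes "finite A"
  shows "(\<Sum>x\<in>A. f x)^2 \<le> real (card A) * (\<Sum>x\<in>A. (f x)^2)"
proof -
  have "0 \<le> (\<Sum>x\<in>A. \<Sum>y\<in>A. (f x - f y)^2)"
    by (intro sum_nonneg) auto
  also have "\<dots> = (\<Sum>x\<in>A. real (card A) * (f x)^2 + (\<Sum>y\<in>A. (f y)^2) - 2 * f x * (\<Sum>y\<in>A. f y))"
    by (rule sum.cong[OF refl]) (simp add: power2_diff sum.distrib sum_subtractf sum_distrib_left mult.assoc)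
  also have "\<dots> = 2 * (real (card A) * (\<Sum>x\<in>A. (f x)^2)) - 2 * (\<Sum>x\<in>A. f x)^2"
    by (simp add: sum.distrib sum_subtractf sum_distrib_left[symmetric] sum_distrib_right[symmetric] power2_eq_square algebra_simps)
       (simp add: sum_distrib_left mult_ac)
  finally show ?thesis by simp
qed

lemma finite_bounded_funs: "finite {f :: 'n::finite \<Rightarrow> nat. \<forall>i. f i \<le> m}"
proof -
  have "{f :: 'n \<Rightarrow> nat. \<forall>i. f i \<le> m} = Pi\<^sub>E UNIV (\<lambda>_. {..m})"
    by (auto simp: PiE_UNIV_domain)
  then show ?thesis by (simp add: finite_PiE)
qed

theorem lemma5:
  fixes a :: "('n::finite \<Rightarrow> nat) \<Rightarrow> real" and k :: nat
  assumes "finite (supp_coeffs a)"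
    and "supp_coeffs a \<noteq> {}"
  shows "traceB2 a k \<le> real (card (supp_coeffs a)) * traceB a k * (\<Sum>R\<in>supp_coeffs a. (a R)^2)"
proof -
  define S where "S = supp_coeffs a"
  define Rw where "Rw = (rows01 k :: ('n \<Rightarrow> nat) set)"
  define C where "C = cols a k"
  define x where "x = (\<lambda>I J. matM a I J)"
  have finS: "finite S" using assms(1) S_def by simp
  have finRw: "finite Rw"
    by (rule finite_subset[OF _ finite_bounded_funs[of 1]]) (auto simp: Rw_def rows01_def)
  obtain m where m: "\<And>R i. R \<in> S \<Longrightarrow> R i \<le> m"
  proof -
    have "\<forall>R\<in>S. \<forall>i. R i \<le> Max ((\<lambda>(R,i). R i) ` (S \<times> UNIV))"
      using finS by (auto intro!: Max_ge)
    then show ?thesis using that by blast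
  qed
  have finC: "finite C"
    by (rule finite_subset[OF _ finite_bounded_funs[of m]])
       (clarsimp simp: C_def cols_def S_def[symmetric], metis le_add2 le_trans m)
  have injJ: "inj_on (\<lambda>J i. I i + J i) A" for I :: "'n \<Rightarrow> nat" and A
    by (auto simp: inj_on_def fun_eq_iff)
  have injI: "inj_on (\<lambda>I i. I i + J i) A" for J :: "'n \<Rightarrow> nat" and A
    by (auto simp: inj_on_def fun_eq_iff)
  have Bdef: "matB a k J J' = (\<Sum>I\<in>Rw. x I J * x I J')" for J J'
    by (simp add: matB_def Rw_def x_def)
  have rowbound: "(\<Sum>I\<in>Rw. (x I J)^2) \<le> (\<Sum>R\<in>S. (a R)^2)" for J
  proof -
    have "(\<Sum>I\<in>Rw. (x I J)^2) = (\<Sum>I\<in>{I\<in>Rw. (\<lambda>i. I i + J i) \<in> S}. (x I J)^2)"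
      by (rule sum.mono_neutral_right) (auto simp: finRw x_def matM_def S_def supp_coeffs_def)
    also have "\<dots> = (\<Sum>R\<in>(\<lambda>I i. I i + J i) ` {I\<in>Rw. (\<lambda>i. I i + J i) \<in> S}. (a R)^2)"
      by (subst sum.reindex[OF injI]) (simp add: x_def matM_def)
    also have "\<dots> \<le> (\<Sum>R\<in>S. (a R)^2)"
      by (rule sum_mono2[OF finS]) auto
    finally show ?thesis .
  qed
  have T2: "traceB2 a k = (\<Sum>I\<in>Rw. \<Sum>I'\<in>Rw. (\<Sum>J\<in>C. x I J * x I' J)^2)"
  proof -
    have "traceB2 a k = (\<Sum>J\<in>C. \<Sum>J'\<in>C. \<Sum>I\<in>Rw. \<Sum>I'\<in>Rw. x I J * x I J' * (x I' J' * x I' J))"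
      by (simp add: traceB2_def C_def[symmetric] Bdef sum_product)
    also have "\<dots> = (\<Sum>J\<in>C. \<Sum>I\<in>Rw. \<Sum>J'\<in>C. \<Sum>I'\<in>Rw. x I J * x I J' * (x I' J' * x I' J))"
      by (rule sum.cong[OF refl], rule sum.swap)
    also have "\<dots> = (\<Sum>J\<in>C. \<Sum>I\<in>Rw. \<Sum>I'\<in>Rw. \<Sum>J'\<in>C. x I J * x I J' * (x I' J' * x I' J))"
      by (rule sum.cong[OF refl], rule sum.cong[OF refl], rule sum.swap)
    also have "\<dots> = (\<Sum>I\<in>Rw. \<Sum>J\<in>C. \<Sum>I'\<in>Rw. \<Sum>J'\<in>C. x I J * x I J' * (x I' J' * x I' J))"
      by (rule sum.swap)
    also have "\<dots> = (\<Sum>I\<in>Rw. \<Sum>I'\<in>Rw. \<Sum>J\<in>C. \<Sum>J'\<in>C. x I J * x I J' * (x I' J' * x I' J))"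
      by (rule sum.cong[OF refl], rule sum.swap)
    also have "\<dots> = (\<Sum>I\<in>Rw. \<Sum>I'\<in>Rw. (\<Sum>J\<in>C. x I J * x I' J)^2)"
      by (simp add: power2_eq_square sum_product mult_ac)
    finally show ?thesis .
  qed
  have step: "(\<Sum>J\<in>C. x I J * x I' J)^2 \<le> real (card S) * (\<Sum>J\<in>C. (x I J)^2 * (x I' J)^2)"
    for I I'
  proof -
    define T where "T = {J\<in>C. (\<lambda>i. I i + J i) \<in> S}"
    have finT: "finite T" using finC T_def by simp
    have e1: "(\<Sum>J\<in>C. x I J * x I' J) = (\<Sum>J\<in>T. x I J * x I' J)"
      by (rule sum.mono_neutral_right) (auto simp: finC T_def x_def matM_def S_def supp_coeffs_def)
    have e2: "(\<Sum>J\<in>C. (x I J)^2 * (x I' J)^2) = (\<Sum>J\<in>T. (x I J)^2 * (x I' J)^2)"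
      by (rule sum.mono_neutral_right) (auto simp: finC T_def x_def matM_def S_def supp_coeffs_def)
    have cT: "card T \<le> card S"
    proof -
      have "card T = card ((\<lambda>J i. I i + J i) ` T)" by (simp add: card_image[OF injJ])
      also have "\<dots> \<le> card S" by (rule card_mono[OF finS]) (auto simp: T_def)
      finally show ?thesis .
    qed
    have "(\<Sum>J\<in>T. x I J * x I' J)^2 \<le> real (card T) * (\<Sum>J\<in>T. (x I J * x I' J)^2)"
      by (rule cs_card[OF finT])
    also have "\<dots> \<le> real (card S) * (\<Sum>J\<in>T. (x I J * x I' J)^2)"
      using cT by (intro mult_right_mono) (auto intro: sum_nonneg)
    finally show ?thesis using e1 e2 by (simp add: power_mult_distrib)
  qed
  have inner: "(\<Sum>I\<in>Rw. \<Sum>I'\<in>Rw. \<Sum>J\<in>C. (x I J)^2 * (x I' J)^2) = (\<Sum>J\<in>C. (\<Sum>I\<in>Rw. (x I J)^2) * (\<Sum>I'\<in>Rw. (x I' J)^2))"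
  proof -
  have "(\<Sum>I\<in>Rw. \<Sum>I'\<in>Rw. \<Sum>J\<in>C. (x I J)^2 * (x I' J)^2) = (\<Sum>I\<in>Rw. \<Sum>J\<in>C. \<Sum>I'\<in>Rw. (x I J)^2 * (x I' J)^2)"
    by (rule sum.cong[OF refl], rule sum.swap)
  also have "\<dots> = (\<Sum>J\<in>C. \<Sum>I\<in>Rw. \<Sum>I'\<in>Rw. (x I J)^2 * (x I' J)^2)"
    by (rule sum.swap)
  also have "\<dots> = (\<Sum>J\<in>C. (\<Sum>I\<in>Rw. (x I J)^2) * (\<Sum>I'\<in>Rw. (x I' J)^2))"
    by (simp add: sum_product)
    finally show ?thesis .
  qed
  have "traceB2 a k \<le> (\<Sum>I\<in>Rw. \<Sum>I'\<in>Rw. real (card S) * (\<Sum>J\<in>C. (x I J)^2 * (x I' J)^2))"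
    unfolding T2 by (intro sum_mono step)
  also have "\<dots> = real (card S) * (\<Sum>I\<in>Rw. \<Sum>I'\<in>Rw. \<Sum>J\<in>C. (x I J)^2 * (x I' J)^2)"
    by (simp add: sum_distrib_left)
  also have "\<dots> = real (card S) * (\<Sum>J\<in>C. (\<Sum>I\<in>Rw. (x I J)^2) * (\<Sum>I'\<in>Rw. (x I' J)^2))"
    using inner by simp
  also have "\<dots> \<le> real (card S) * (\<Sum>J\<in>C. (\<Sum>I\<in>Rw. (x I J)^2) * (\<Sum>R\<in>S. (a R)^2))"
    by (intro mult_left_mono sum_mono mult_left_mono rowbound) (auto intro: sum_nonneg)
  also have "\<dots> = real (card S) * traceB a k * (\<Sum>R\<in>S. (a R)^2)"
    by (simp add: traceB_def C_def[symmetric] Bdef sum_distrib_right[symmetric] power2_eq_square)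
  finally show ?thesis by (simp add: S_def)
qed

end
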